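(* Let $k\in\mathbb{N}$, $k>1$, $z\in\mathbb{Z}$ and $l,t\in\mathbb{Z}[1/k]$. Then the following are equivalent: (1) $l\cdot z=t$; (2) for every $n\in\mathbb{Z}$, $l\cdot(k^{nz}-1)\equiv t\cdot(k^n-1)\pmod{(k^n-1)^2}$ in the ring $\mathbb{Z}[1/k]$.
   Context: $\mathbb{Z}[1/k]=\{zk^i: z,i\in\mathbb{Z}\}\subseteq\mathbb{Q}$. *)

theory Defs
  imports Complex_Main
begin

definition Zinv :: "nat \<Rightarrow> rat set" where
  "Zinv k = {of_int z * (of_nat k) powi i | z i. True}"

definition congZinv :: "nat \<Rightarrow> rat \<Rightarrow> rat \<Rightarrow> rat \<Rightarrow> bool" where
  "congZinv k a b m \<longleftrightarrow> (\<exists>c\<in>Zinv k. a - b = c * m)"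

end

theory Submission
  imports Defs
begin

lemma Zinv_iff:
  assumes "k > 0"
  shows "q \<in> Zinv k \<longleftrightarrow> (\<exists>a N. q = of_int a / of_nat k ^ N)"
proof
  assume "q \<in> Zinv k"
  then obtain z i where q: "q = of_int z * (of_nat k) powi i" by (auto simp: Zinv_def)
  show "\<exists>a N. q = of_int a / of_nat k ^ N"
  proof (cases "i \<ge> 0")
    case True
    define m where "m = nat i"
    have "i = int m" using True by (simp add: m_def)
    then have "q = of_int (z * int k ^ m) / of_nat k ^ 0" using q by (simp add: power_int_of_nat)
    then show ?thesis by blast
  next
    case False
    define m where "m = nat (- i)"
    have "i = - int m" using False by (simp add: m_def)
    then have "q = of_int z / of_nat k ^ m" using q
      by (simp add: power_int_minus power_int_of_nat divide_inverse)
    then show ?thesis by blast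
  qed
next
  assume "\<exists>a N. q = of_int a / of_nat k ^ N"
  then obtain a N where q: "q = of_int a / of_nat k ^ N" by blast
  have "q = of_int a * (of_nat k) powi (- int N)"
    using q by (simp add: power_int_minus power_int_of_nat divide_inverse)
  then show "q \<in> Zinv k" by (auto simp: Zinv_def)
qed

lemma Zinv_of_int: "(of_int a :: rat) \<in> Zinv k"
  unfolding Zinv_def by (rule CollectI, rule exI[of _ a], rule exI[of _ 0]) simp

lemma Zinv_powi: "(of_nat k :: rat) powi i \<in> Zinv k"
  unfolding Zinv_def by (rule CollectI, rule exI[of _ 1], rule exI[of _ i]) simp

lemma Zinv_add:
  assumes "k > 0" "p \<in> Zinv k" "q \<in> Zinv k"
  shows "p + q \<in> Zinv k"
proof -
  obtain a N where p: "p = of_int a / of_nat k ^ N" using assms Zinv_iff by blast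
  obtain b M where q: "q = of_int b / of_nat k ^ M" using assms Zinv_iff by blast
  have "p + q = of_int (a * int k ^ M + b * int k ^ N) / of_nat k ^ (N + M)"
    using assms(1) by (simp add: p q field_simps power_add)
  then show ?thesis using Zinv_iff assms(1) by blast
qed

lemma Zinv_mult:
  assumes "k > 0" "p \<in> Zinv k" "q \<in> Zinv k"
  shows "p * q \<in> Zinv k"
proof -
  obtain a N where p: "p = of_int a / of_nat k ^ N" using assms Zinv_iff by blast
  obtain b M where q: "q = of_int b / of_nat k ^ M" using assms Zinv_iff by blast
  have "p * q = of_int (a * b) / of_nat k ^ (N + M)"
    using assms(1) by (simp add: p q field_simps power_add)
  then show ?thesis using Zinv_iff assms(1) by blast
qed

lemma Zinv_diff:
  assumes "k > 0" "p \<in> Zinv k" "q \<in> Zinv k"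
  shows "p - q \<in> Zinv k"
proof -
  have "- q \<in> Zinv k" using Zinv_mult[OF assms(1) Zinv_of_int[of "-1"] assms(3)] by simp
  have "p - q = p + (- q)" by simp
  then show ?thesis using Zinv_add[OF assms(1) assms(2) \<open>- q \<in> Zinv k\<close>] by simp
qed

lemma key:
  assumes k: "k > 0"
  shows "\<exists>q\<in>Zinv k. ((of_nat k :: rat) powi n) powi z - 1 - of_int z * ((of_nat k) powi n - 1)
            = q * ((of_nat k) powi n - 1)^2"
proof (induct z rule: int_induct[where k=0])
  case base
  show ?case using Zinv_of_int[of 0 k] by force
next
  case (step1 i)
  define x :: rat where "x = (of_nat k) powi n"
  have x0: "x \<noteq> 0" using k by (simp add: x_def)
  have xZ: "x \<in> Zinv k" by (simp add: x_def Zinv_powi)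
  from step1 obtain q where q: "q \<in> Zinv k" "x powi i - 1 - of_int i * (x - 1) = q * (x - 1)^2"
    unfolding x_def by blast
  have e: "x powi (i+1) = x powi i * x" using x0 by (simp add: power_int_add_1)
  have "x powi (i+1) - 1 - of_int (i+1) * (x - 1) = (x * q + of_int i) * (x - 1)^2"
  proof -
    have h: "x powi i = 1 + of_int i * (x - 1) + q * (x - 1)^2" using q(2) by (simp add: algebra_simps)
    show ?thesis unfolding e h by (simp add: power2_eq_square algebra_simps)
  qed
  moreover have "x * q + of_int i \<in> Zinv k"
    using Zinv_add[OF k Zinv_mult[OF k xZ q(1)] Zinv_of_int] .
  ultimately show ?case unfolding x_def by blast
next
  case (step2 i)
  define x :: rat where "x = (of_nat k) powi n"
  have x0: "x \<noteq> 0" using k by (simp add: x_def)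
  have xZ: "inverse x \<in> Zinv k" using Zinv_powi[of k "-n"] by (simp add: x_def power_int_minus)
  from step2 obtain q where q: "q \<in> Zinv k" "x powi i - 1 - of_int i * (x - 1) = q * (x - 1)^2"
    unfolding x_def by blast
  have e: "x powi i = x powi (i - 1) * x" using x0 power_int_add_1[of x "i - 1"] by simp
  have "x powi (i-1) - 1 - of_int (i-1) * (x - 1) = (inverse x * (q - of_int (i - 1))) * (x - 1)^2"
  proof -
    have "x * (x powi (i-1) - 1 - of_int (i-1) * (x - 1)) = x * ((inverse x * (q - of_int (i - 1))) * (x - 1)^2)"
    proof -
      have h: "x powi (i-1) * x = 1 + of_int i * (x - 1) + q * (x - 1)^2" using q(2) e by (simp add: algebra_simps)
      have "x * (x powi (i-1) - 1 - of_int (i-1) * (x - 1)) = x powi (i-1) * x - x - of_int (i-1) * x * (x - 1)"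
        by (simp add: algebra_simps)
      also have "... = x * ((inverse x * (q - of_int (i - 1))) * (x - 1)^2)"
        unfolding h using x0 by (simp add: power2_eq_square field_simps)
      finally show ?thesis .
    qed
    then show ?thesis using x0 by simp
  qed
  moreover have "inverse x * (q - of_int (i - 1)) \<in> Zinv k"
    using Zinv_mult[OF k xZ Zinv_diff[OF k q(1) Zinv_of_int]] .
  ultimately show ?case unfolding x_def by blast
qed

lemma fwd:
  assumes k: "k > 0" and lZ: "l \<in> Zinv k"
  shows "\<exists>c\<in>Zinv k. l * ((of_nat k) powi (n * z) - 1) - l * of_int z * ((of_nat k) powi n - 1)
            = c * (((of_nat k :: rat) powi n - 1)^2)"
proof -
  obtain q where q: "q \<in> Zinv k" "((of_nat k :: rat) powi n) powi z - 1 - of_int z * ((of_nat k) powi n - 1)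
            = q * ((of_nat k) powi n - 1)^2" using key[OF k] by blast
  have "l * ((of_nat k) powi (n * z) - 1) - l * of_int z * ((of_nat k) powi n - 1)
     = l * (((of_nat k :: rat) powi n) powi z - 1 - of_int z * ((of_nat k) powi n - 1))"
    by (simp add: power_int_mult algebra_simps)
  also have "... = (l * q) * (((of_nat k :: rat) powi n - 1)^2)" using q(2) by simp
  finally have eq: "l * ((of_nat k) powi (n * z) - 1) - l * of_int z * ((of_nat k) powi n - 1)
            = (l * q) * (((of_nat k :: rat) powi n - 1)^2)" .
  moreover have "l * q \<in> Zinv k" using Zinv_mult[OF k lZ q(1)] .
  ultimately show ?thesis by blast
qed

lemma no_small_dvd:
  fixes a :: int
  assumes k: "k > 1"
  shows "\<exists>m>0. \<bar>a\<bar> < int k ^ m - 1"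
proof -
  define m where "m = nat \<bar>a\<bar> + 1"
  have "m < 2 ^ m" by (rule less_exp)
  moreover have "(2::nat) ^ m \<le> k ^ m" using k by (simp add: power_mono)
  ultimately have "int m < int k ^ m" by (metis less_le_trans of_nat_less_iff of_nat_power)
  then have "\<bar>a\<bar> < int k ^ m - 1" unfolding m_def by simp
  then show ?thesis unfolding m_def by auto
qed

theorem corollary3p2:
  fixes k :: nat and z :: int and l t :: rat
  assumes "k > 1" and "l \<in> Zinv k" and "t \<in> Zinv k"
  shows "l * of_int z = t \<longleftrightarrow>
    (\<forall>n::int. congZinv k (l * ((of_nat k) powi (n * z) - 1))
                          (t * ((of_nat k) powi n - 1))
                          (((of_nat k) powi n - 1)^2))"
proof
  have k0: "k > 0" using assms(1) by simp
  assume "l * of_int z = t"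
  then show "\<forall>n::int. congZinv k (l * ((of_nat k) powi (n * z) - 1))
                          (t * ((of_nat k) powi n - 1))
                          (((of_nat k) powi n - 1)^2)"
    using fwd[OF k0 assms(2)] unfolding congZinv_def by blast
next
  have k0: "k > 0" using assms(1) by simp
  assume H: "\<forall>n::int. congZinv k (l * ((of_nat k) powi (n * z) - 1))
                          (t * ((of_nat k) powi n - 1))
                          (((of_nat k) powi n - 1)^2)"
  define s where "s = l * of_int z - t"
  have sZ: "s \<in> Zinv k" unfolding s_def
    using Zinv_diff[OF k0 Zinv_mult[OF k0 assms(2) Zinv_of_int] assms(3)] .
  obtain a N where aN: "s = of_int a / of_nat k ^ N" using sZ Zinv_iff[OF k0] by blast
  obtain m where m: "m > 0" "\<bar>a\<bar> < int k ^ m - 1" using no_small_dvd[OF assms(1)] by blast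
  define y :: rat where "y = of_nat k ^ m"
  have y1: "y - 1 \<noteq> 0"
  proof -
    have "int k ^ m - 1 > 0" using m by linarith
    moreover have "\<And>x::int. x > 0 \<Longrightarrow> (of_int x :: rat) \<noteq> 0" by simp
    ultimately have "(of_int (int k ^ m - 1) :: rat) \<noteq> 0" by blast
    moreover have "(of_int (int k ^ m - 1) :: rat) = y - 1" by (simp add: y_def)
    ultimately show ?thesis by simp
  qed
  have py: "(of_nat k :: rat) powi (int m) = y" by (simp add: y_def power_int_of_nat)
  obtain c where c: "c \<in> Zinv k" "l * ((of_nat k) powi (int m * z) - 1) - t * (y - 1) = c * (y - 1)^2"
    using H[rule_format, of "int m"] unfolding congZinv_def py by blast
  obtain d where d: "d \<in> Zinv k" "l * ((of_nat k) powi (int m * z) - 1) - l * of_int z * (y - 1) = d * (y - 1)^2"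
    using fwd[OF k0 assms(2), of "int m" z] unfolding py by blast
  have "s * (y - 1) = ((c - d) * (y - 1)) * (y - 1)"
  proof -
    have "s * (y - 1) = (l * ((of_nat k) powi (int m * z) - 1) - t * (y - 1))
       - (l * ((of_nat k) powi (int m * z) - 1) - l * of_int z * (y - 1))"
      unfolding s_def by (simp add: algebra_simps)
    also have "... = ((c - d) * (y - 1)) * (y - 1)" unfolding c(2) d(2) by (simp add: power2_eq_square algebra_simps)
    finally show ?thesis .
  qed
  then have se: "s = (c - d) * (y - 1)" using y1 by simp
  have "c - d \<in> Zinv k" using Zinv_diff[OF k0 c(1) d(1)] .
  then obtain b M where bM: "c - d = of_int b / of_nat k ^ M" using Zinv_iff[OF k0] by blast
  have "of_int a / of_nat k ^ N = of_int b / of_nat k ^ M * (of_nat k ^ m - (1::rat))"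
    using se aN bM y_def by simp
  then have "(of_int a :: rat) * of_nat k ^ M = of_int b * of_nat k ^ N * (of_nat k ^ m - 1)"
    using k0 by (simp add: field_simps)
  then have "(of_int (a * int k ^ M) :: rat) = of_int (b * int k ^ N * (int k ^ m - 1))" by simp
  then have eq: "a * int k ^ M = b * int k ^ N * (int k ^ m - 1)" by (simp only: of_int_eq_iff)
  have cop: "coprime (int k ^ m - 1) (int k ^ M)"
  proof -
    have "coprime (int k ^ m - 1) (int k ^ m)" by (rule coprime_diff_one_left)
    then have "coprime (int k ^ m - 1) (int k)" using m(1) by (simp add: coprime_power_right_iff)
    then show ?thesis by (simp add: coprime_power_right_iff)
  qed
  have "(int k ^ m - 1) dvd a * int k ^ M" using eq by simp
  then have dv: "(int k ^ m - 1) dvd a" using cop coprime_dvd_mult_left_iff by blast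
  have "a = 0"
  proof (rule ccontr)
    assume "a \<noteq> 0"
    then have "\<bar>int k ^ m - 1\<bar> \<le> \<bar>a\<bar>" using dv dvd_imp_le_int by blast
    then show False using m(2) by linarith
  qed
  then have "s = 0" using aN by simp
  then show "l * of_int z = t" unfolding s_def by simp
qed

end
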